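(* Let $m\in\mathbb{N}$, let $f_1,\dots,f_m\in C[0,1]$, and let $\mathcal{R}'$ be the ring of functions $x\mapsto p(f_1(x),\dots,f_m(x))$ where $p$ ranges over polynomials in $m$ variables with real coefficients. Then for every $r'\in\mathcal{R}'$, $$\overline{\dim}_B G(r')\le \max\{\overline{\dim}_B G(f_1),\dots,\overline{\dim}_B G(f_m)\}.$$
   Context: $C[0,1]$ is the space of real-valued continuous functions on $[0,1]$; $G(h)=\{(x,h(x)):x\in[0,1]\}\subset\mathbb{R}^2$ is the graph of $h$. For a nonempty bounded set $F$, $N_\delta(F)$ is the smallest number of sets of diameter at most $\delta$ covering $F$, and $\overline{\dim}_B F=\limsup_{\delta\to0}\frac{\log N_\delta(F)}{-\log\delta}$. *)

theory Defs
  imports "HOL-Analysis.Analysis" "HOL-Library.Liminf_Limsup"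
begin

definition graph01 :: "(real \<Rightarrow> real) \<Rightarrow> (real \<times> real) set" where
  "graph01 h = {(x, h x) | x. x \<in> {0..1}}"

definition covering_number :: "real \<Rightarrow> 'a::metric_space set \<Rightarrow> nat" where
  "covering_number \<delta> F = (LEAST n. \<exists>C. finite C \<and> card C = n \<and>
      (\<forall>S\<in>C. bounded S \<and> diameter S \<le> \<delta>) \<and> F \<subseteq> \<Union>C)"

definition upper_box_dim :: "'a::metric_space set \<Rightarrow> ereal" where
  "upper_box_dim F = Limsup (at_right 0)
      (\<lambda>\<delta>. ereal (ln (real (covering_number \<delta> F)) / - ln \<delta>))"

text \<open>The ring R' generated by f_0..f_{m-1}: functions x \<mapsto> p(f_0 x, ..., f_{m-1} x),
  p a real polynomial in m variables, written as a finite sum of monomials with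
  exponent vectors \<alpha> (only \<alpha> i for i < m matter).\<close>
definition poly_ring_of :: "nat \<Rightarrow> (nat \<Rightarrow> real \<Rightarrow> real) \<Rightarrow> (real \<Rightarrow> real) set" where
  "poly_ring_of m f = {r. \<exists>A c. finite A \<and>
      r = (\<lambda>x. \<Sum>\<alpha>\<in>A. c \<alpha> * (\<Prod>i<m. f i x ^ \<alpha> i))}"

end

theory Submission
  imports Defs
begin


lemma interval_cover:
  fixes T :: "real set set"
  assumes fin: "finite T" and sub: "{a..b} \<subseteq> \<Union>T" and ab: "a \<le> b" and d: "\<delta> \<ge> 0"
    and diam: "\<forall>S\<in>T. \<forall>s\<in>S. \<forall>t\<in>S. \<bar>s - t\<bar> \<le> \<delta>"
  shows "b - a \<le> 2*\<delta>*card T"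
proof -
  define I where "I S = (if S = {} then {} else {(SOME s. s \<in> S) - \<delta> .. (SOME s. s \<in> S) + \<delta>})" for S :: "real set"
  have SI: "S \<subseteq> I S" if "S \<in> T" for S
  proof (cases "S = {}")
    case False
    define s0 where "s0 = (SOME s. s \<in> S)"
    then have "s0 \<in> S" using False by (simp add: some_in_eq)
    then have "\<forall>t\<in>S. \<bar>t - s0\<bar> \<le> \<delta>" using diam that by blast
    then show ?thesis using False unfolding I_def s0_def[symmetric]
      by (force simp: abs_le_iff)
  qed (simp add: I_def)
  have mI: "emeasure lborel (I S) \<le> ennreal (2*\<delta>)" for S
    using d by (auto simp: I_def)
  have "ennreal (b - a) = emeasure lborel {a..b}" using ab by simp
  also have "\<dots> \<le> emeasure lborel (\<Union>S\<in>T. I S)"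
    apply (rule emeasure_mono) using sub SI apply blast
    using fin by (intro sets.finite_UN) (auto simp: I_def)
  also have "\<dots> \<le> (\<Sum>S\<in>T. emeasure lborel (I S))"
    apply (rule emeasure_subadditive_finite) using fin by (auto simp: I_def)
  also have "\<dots> \<le> (\<Sum>S\<in>T. ennreal (2*\<delta>))" by (rule sum_mono) (rule mI)
  also have "\<dots> = ennreal (2*\<delta>*card T)" using d
    by (simp add: ennreal_mult' ennreal_of_nat_eq_real_of_nat mult.commute)
  finally show ?thesis using d by (simp add: ennreal_le_iff)
qed

lemma cov_le:
  assumes "finite C" "\<forall>S\<in>C. bounded S \<and> diameter S \<le> \<delta>" "F \<subseteq> \<Union>C"
  shows "covering_number \<delta> F \<le> card C"
  unfolding covering_number_def by (rule Least_le) (use assms in blast)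

lemma cov_attained:
  assumes "\<exists>C. finite C \<and> (\<forall>S\<in>C. bounded S \<and> diameter S \<le> \<delta>) \<and> F \<subseteq> \<Union>C"
  shows "\<exists>C. finite C \<and> card C = covering_number \<delta> F \<and>
      (\<forall>S\<in>C. bounded S \<and> diameter S \<le> \<delta>) \<and> F \<subseteq> \<Union>C"
proof -
  have "\<exists>n C. finite C \<and> card C = n \<and> (\<forall>S\<in>C. bounded S \<and> diameter S \<le> \<delta>) \<and> F \<subseteq> \<Union>C"
    using assms by blast
  then show ?thesis unfolding covering_number_def by (rule LeastI_ex)
qed

lemma graph_compact:
  assumes "continuous_on {0..1} h"
  shows "compact (graph01 h)"
proof -
  have "graph01 h = (\<lambda>x. (x, h x)) ` {0..1}" unfolding graph01_def by auto
  moreover have "continuous_on {0..1} (\<lambda>x. (x, h x))"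
    by (intro continuous_on_Pair continuous_on_id assms)
  ultimately show ?thesis by (metis compact_Icc compact_continuous_image)
qed

lemma graph_cover_exists:
  assumes "continuous_on {0..1} h" "\<delta> > 0"
  shows "\<exists>C. finite C \<and> (\<forall>S\<in>C. bounded S \<and> diameter S \<le> \<delta>) \<and> graph01 h \<subseteq> \<Union>C"
proof -
  obtain k where k: "finite k" "graph01 h \<subseteq> (\<Union>x\<in>k. ball x (\<delta>/2))"
    using graph_compact[OF assms(1)] assms(2) unfolding compact_eq_totally_bounded
    by (meson half_gt_zero)
  show ?thesis
    by (rule exI[of _ "(\<lambda>x. ball x (\<delta>/2)) ` k"]) (use k assms(2) in auto)
qed

lemma col_osc:
  fixes g :: "real \<Rightarrow> real"
  assumes cont: "continuous_on {0..1} g" and d: "\<delta> > 0" and fin: "finite C"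
    and CC: "\<forall>S\<in>C. bounded S \<and> diameter S \<le> \<delta>" and cov: "graph01 g \<subseteq> \<Union>C"
    and x: "x \<in> {0..1}" and y: "y \<in> {0..1}" and xj: "\<lfloor>x/\<delta>\<rfloor> = j" and yj: "\<lfloor>y/\<delta>\<rfloor> = j"
  shows "\<bar>g x - g y\<bar> \<le> 2*\<delta>*card {S\<in>C. \<exists>t\<in>{0..1}. \<lfloor>t/\<delta>\<rfloor> = j \<and> (t, g t) \<in> S}"
proof -
  define B where "B = {S\<in>C. \<exists>t\<in>{0..1}. \<lfloor>t/\<delta>\<rfloor> = j \<and> (t, g t) \<in> S}"
  have finB: "finite B" using fin unfolding B_def by simp
  have main: "\<bar>g a - g b\<bar> \<le> 2*\<delta>*card B"
    if ab: "a \<le> b" "a \<in> {0..1}" "b \<in> {0..1}" "\<lfloor>a/\<delta>\<rfloor> = j" "\<lfloor>b/\<delta>\<rfloor> = j" for a b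
  proof -
    define T where "T = (\<lambda>S. snd ` S) ` B"
    have contab: "continuous_on {a..b} g" using cont ab by (auto intro: continuous_on_subset)
    have inB: "\<exists>S\<in>B. v \<in> snd ` S" if "t \<in> {a..b}" "g t = v" for t v
    proof -
      have t01: "t \<in> {0..1}" using that ab by auto
      have "a/\<delta> \<le> t/\<delta>" "t/\<delta> \<le> b/\<delta>" using that d by (auto simp: divide_right_mono)
      then have tj: "\<lfloor>t/\<delta>\<rfloor> = j" using ab
        by (metis floor_mono order_antisym)
      have "(t, g t) \<in> graph01 g" using t01 unfolding graph01_def by auto
      then obtain S where "S \<in> C" "(t, g t) \<in> S" using cov by blast
      then show ?thesis unfolding B_def using t01 tj that(2) by (force intro: image_eqI[of _ snd "(t, g t)"])
    qed
    have sub: "{min (g a) (g b)..max (g a) (g b)} \<subseteq> \<Union>T"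
    proof
      fix v assume v: "v \<in> {min (g a) (g b)..max (g a) (g b)}"
      have "\<exists>t. a \<le> t \<and> t \<le> b \<and> g t = v"
      proof (cases "g a \<le> g b")
        case True
        then show ?thesis using IVT'[of g a v b] v ab contab by auto
      next
        case False
        then show ?thesis using IVT2'[of g b v a] v ab contab by auto
      qed
      then show "v \<in> \<Union>T" using inB unfolding T_def by auto
    qed
    have diamT: "\<forall>S\<in>T. \<forall>s\<in>S. \<forall>t\<in>S. \<bar>s - t\<bar> \<le> \<delta>"
    proof (intro ballI)
      fix S' s t assume "S' \<in> T" "s \<in> S'" "t \<in> S'"
      then obtain S where S: "S \<in> C" "S' = snd ` S" unfolding T_def B_def by auto
      then obtain p q where "p \<in> S" "q \<in> S" "s = snd p" "t = snd q" using \<open>s \<in> S'\<close> \<open>t \<in> S'\<close> by auto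
      moreover have "dist p q \<le> diameter S" using S CC \<open>p \<in> S\<close> \<open>q \<in> S\<close> by (auto intro: diameter_bounded_bound)
      ultimately show "\<bar>s - t\<bar> \<le> \<delta>" using dist_snd_le[of p q] CC S by (auto simp: dist_real_def)
    qed
    have "max (g a) (g b) - min (g a) (g b) \<le> 2*\<delta>*card T"
      by (rule interval_cover) (use finB sub diamT d in \<open>auto simp: T_def\<close>)
    also have "\<dots> \<le> 2*\<delta>*card B" unfolding T_def using d finB by (auto intro: card_image_le)
    finally show ?thesis by linarith
  qed
  show ?thesis
  proof (cases "x \<le> y")
    case True then show ?thesis using main x y xj yj unfolding B_def by blast
  next
    case False then show ?thesis using main[of y x] x y xj yj unfolding B_def by (simp add: abs_minus_commute)
  qed
qed

lemma col_count:
  fixes g :: "real \<Rightarrow> real" and J :: int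
  assumes d: "\<delta> > 0" and fin: "finite C"
    and CC: "\<forall>S\<in>C. bounded S \<and> diameter S \<le> \<delta>"
  shows "(\<Sum>j\<in>{0..J}. card {S\<in>C. \<exists>t\<in>{0..1}. \<lfloor>t/\<delta>\<rfloor> = j \<and> (t, g t) \<in> S}) \<le> 3 * card C"
proof -
  define P where "P S j = (\<exists>t\<in>{0..1::real}. \<lfloor>t/\<delta>\<rfloor> = j \<and> (t, g t) \<in> S)" for S j
  have eq: "card {S\<in>C. P S j} = (\<Sum>S\<in>C. if P S j then 1 else 0)" for j
  proof -
    have "{S\<in>C. P S j} = C \<inter> {S. P S j}" by blast
    then show ?thesis using fin by (simp add: sum.If_cases)
  qed
  have each: "card {j\<in>{0..J}. P S j} \<le> 3" if "S \<in> C" for S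
  proof (cases "\<exists>j. P S j")
    case False then show ?thesis by simp
  next
    case True
    then obtain j0 where j0: "P S j0" by blast
    have "{j\<in>{0..J}. P S j} \<subseteq> {j0-1..j0+1}"
    proof
      fix j assume "j \<in> {j\<in>{0..J}. P S j}"
      then have "P S j" by simp
      then obtain t where t: "(t, g t) \<in> S" "\<lfloor>t/\<delta>\<rfloor> = j" unfolding P_def by blast
      obtain u where u: "(u, g u) \<in> S" "\<lfloor>u/\<delta>\<rfloor> = j0" using j0 unfolding P_def by blast
      have "dist (t, g t) (u, g u) \<le> diameter S" using CC that t u by (auto intro: diameter_bounded_bound)
      then have "\<bar>t - u\<bar> \<le> \<delta>" using dist_fst_le[of "(t, g t)" "(u, g u)"] CC that
        by (auto simp: dist_real_def)
      then have "\<bar>t/\<delta> - u/\<delta>\<bar> \<le> 1" using d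
        by (simp add: diff_divide_distrib[symmetric] abs_divide divide_le_eq_1)
      then have "\<bar>\<lfloor>t/\<delta>\<rfloor> - \<lfloor>u/\<delta>\<rfloor>\<bar> \<le> 1"
        by (smt (verit, best) floor_less_iff le_floor_iff of_int_1 of_int_diff of_int_floor_le floor_correct)
      then show "j \<in> {j0-1..j0+1}" using t u by auto
    qed
    then have "card {j\<in>{0..J}. P S j} \<le> card {j0-1..j0+1}" by (intro card_mono) auto
    then show ?thesis by simp
  qed
  have "(\<Sum>j\<in>{0..J}. card {S\<in>C. P S j}) = (\<Sum>S\<in>C. \<Sum>j\<in>{0..J}. if P S j then 1 else 0)"
    unfolding eq by (rule sum.swap)
  also have "\<dots> = (\<Sum>S\<in>C. card {j\<in>{0..J}. P S j})"
  proof (rule sum.cong)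
    fix S
    have "{j\<in>{0..J}. P S j} = {0..J} \<inter> {j. P S j}" by blast
    then show "(\<Sum>j\<in>{0..J}. if P S j then 1 else 0) = card {j\<in>{0..J}. P S j}"
      by (simp add: sum.If_cases)
  qed simp
  also have "\<dots> \<le> (\<Sum>S\<in>C. 3)" by (rule sum_mono) (rule each)
  also have "\<dots> = 3 * card C" by simp
  finally show ?thesis unfolding P_def .
qed

lemma cov_lower:
  fixes g :: "real \<Rightarrow> real"
  assumes d: "\<delta> > 0" and fin: "finite C"
    and CC: "\<forall>S\<in>C. bounded S \<and> diameter S \<le> \<delta>" and cov: "graph01 g \<subseteq> \<Union>C"
  shows "1 \<le> 2*\<delta>*card C"
proof -
  define T where "T = (\<lambda>S. fst ` S) ` C"
  have sub: "{0..1} \<subseteq> \<Union>T"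
  proof
    fix x :: real assume "x \<in> {0..1}"
    then have "(x, g x) \<in> graph01 g" unfolding graph01_def by auto
    then obtain S where "S \<in> C" "(x, g x) \<in> S" using cov by blast
    then show "x \<in> \<Union>T" unfolding T_def by (force intro: image_eqI[of _ fst "(x, g x)"])
  qed
  have diamT: "\<forall>S\<in>T. \<forall>s\<in>S. \<forall>t\<in>S. \<bar>s - t\<bar> \<le> \<delta>"
  proof (intro ballI)
    fix S' s t assume "S' \<in> T" "s \<in> S'" "t \<in> S'"
    then obtain S where S: "S \<in> C" "S' = fst ` S" unfolding T_def by auto
    then obtain p q where "p \<in> S" "q \<in> S" "s = fst p" "t = fst q" using \<open>s \<in> S'\<close> \<open>t \<in> S'\<close> by auto
    moreover have "dist p q \<le> diameter S" using S CC \<open>p \<in> S\<close> \<open>q \<in> S\<close> by (auto intro: diameter_bounded_bound)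
    ultimately show "\<bar>s - t\<bar> \<le> \<delta>" using dist_fst_le[of p q] CC S by (auto simp: dist_real_def)
  qed
  have "1 - 0 \<le> 2*\<delta>*card T"
    by (rule interval_cover) (use fin sub diamT d in \<open>auto simp: T_def\<close>)
  also have "\<dots> \<le> 2*\<delta>*card C" unfolding T_def using d fin by (auto intro: card_image_le)
  finally show ?thesis by simp
qed

definition dom01 :: "nat \<Rightarrow> (nat \<Rightarrow> real \<Rightarrow> real) \<Rightarrow> (real \<Rightarrow> real) \<Rightarrow> bool" where
  "dom01 m f g \<longleftrightarrow> (\<exists>B\<ge>0. \<forall>x\<in>{0..1}. \<bar>g x\<bar> \<le> B) \<and>
     (\<exists>L\<ge>0. \<forall>x\<in>{0..1}. \<forall>y\<in>{0..1}. \<bar>g x - g y\<bar> \<le> L * (\<Sum>i<m. \<bar>f i x - f i y\<bar>))"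

lemma dom_const: "dom01 m f (\<lambda>x. c)"
  unfolding dom01_def
  apply (rule conjI)
   apply (rule exI[of _ "\<bar>c\<bar>"]) apply simp
  apply (rule exI[of _ 0]) apply simp
  done

lemma dom_f:
  assumes "i < m" "continuous_on {0..1} (f i)"
  shows "dom01 m f (f i)"
proof -
  have "bounded (f i ` {0..1})" using assms(2) by (intro compact_imp_bounded compact_continuous_image) auto
  then obtain B where B: "\<forall>x\<in>{0..1}. \<bar>f i x\<bar> \<le> B" unfolding bounded_real by auto
  have "\<bar>f i x - f i y\<bar> \<le> 1 * (\<Sum>i<m. \<bar>f i x - f i y\<bar>)" for x y
    using member_le_sum[of i "{..<m}" "\<lambda>i. \<bar>f i x - f i y\<bar>"] assms(1) by auto
  moreover have "\<forall>x\<in>{0..1}. \<bar>f i x\<bar> \<le> max B 0" using B by (meson max.coboundedI1)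
  ultimately show ?thesis unfolding dom01_def
    by (meson max.cobounded2 zero_le_one)
qed

lemma dom_add:
  assumes "dom01 m f g" "dom01 m f h"
  shows "dom01 m f (\<lambda>x. g x + h x)"
proof -
  obtain B1 L1 where 1: "B1 \<ge> 0" "L1 \<ge> 0" "\<forall>x\<in>{0..1}. \<bar>g x\<bar> \<le> B1"
     "\<forall>x\<in>{0..1}. \<forall>y\<in>{0..1}. \<bar>g x - g y\<bar> \<le> L1 * (\<Sum>i<m. \<bar>f i x - f i y\<bar>)"
    using assms(1) unfolding dom01_def by blast
  obtain B2 L2 where 2: "B2 \<ge> 0" "L2 \<ge> 0" "\<forall>x\<in>{0..1}. \<bar>h x\<bar> \<le> B2"
     "\<forall>x\<in>{0..1}. \<forall>y\<in>{0..1}. \<bar>h x - h y\<bar> \<le> L2 * (\<Sum>i<m. \<bar>f i x - f i y\<bar>)"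
    using assms(2) unfolding dom01_def by blast
  have "\<forall>x\<in>{0..1}. \<forall>y\<in>{0..1}. \<bar>g x + h x - (g y + h y)\<bar> \<le> (L1 + L2) * (\<Sum>i<m. \<bar>f i x - f i y\<bar>)"
  proof (intro ballI)
    fix x y :: real assume "x \<in> {0..1}" "y \<in> {0..1}"
    then have a: "\<bar>g x - g y\<bar> \<le> L1 * (\<Sum>i<m. \<bar>f i x - f i y\<bar>)"
      and b: "\<bar>h x - h y\<bar> \<le> L2 * (\<Sum>i<m. \<bar>f i x - f i y\<bar>)" using 1(4) 2(4) by auto
    have "\<bar>g x + h x - (g y + h y)\<bar> \<le> \<bar>g x - g y\<bar> + \<bar>h x - h y\<bar>" by linarith
    then show "\<bar>g x + h x - (g y + h y)\<bar> \<le> (L1 + L2) * (\<Sum>i<m. \<bar>f i x - f i y\<bar>)"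
      using a b by (simp add: distrib_right)
  qed
  moreover have "\<forall>x\<in>{0..1}. \<bar>g x + h x\<bar> \<le> B1 + B2"
  proof
    fix x :: real assume "x \<in> {0..1}"
    then have "\<bar>g x\<bar> \<le> B1" "\<bar>h x\<bar> \<le> B2" using 1(3) 2(3) by auto
    then show "\<bar>g x + h x\<bar> \<le> B1 + B2" by linarith
  qed
  moreover have "B1 + B2 \<ge> 0" "L1 + L2 \<ge> 0" using 1 2 by auto
  ultimately show ?thesis unfolding dom01_def by blast
qed

lemma dom_mult:
  assumes "dom01 m f g" "dom01 m f h"
  shows "dom01 m f (\<lambda>x. g x * h x)"
proof -
  obtain B1 L1 where 1: "B1 \<ge> 0" "L1 \<ge> 0" "\<forall>x\<in>{0..1}. \<bar>g x\<bar> \<le> B1"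
     "\<forall>x\<in>{0..1}. \<forall>y\<in>{0..1}. \<bar>g x - g y\<bar> \<le> L1 * (\<Sum>i<m. \<bar>f i x - f i y\<bar>)"
    using assms(1) unfolding dom01_def by blast
  obtain B2 L2 where 2: "B2 \<ge> 0" "L2 \<ge> 0" "\<forall>x\<in>{0..1}. \<bar>h x\<bar> \<le> B2"
     "\<forall>x\<in>{0..1}. \<forall>y\<in>{0..1}. \<bar>h x - h y\<bar> \<le> L2 * (\<Sum>i<m. \<bar>f i x - f i y\<bar>)"
    using assms(2) unfolding dom01_def by blast
  have "\<forall>x\<in>{0..1}. \<forall>y\<in>{0..1}. \<bar>g x * h x - g y * h y\<bar> \<le> (B1 * L2 + B2 * L1) * (\<Sum>i<m. \<bar>f i x - f i y\<bar>)"
  proof (intro ballI)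
    fix x y :: real assume xy: "x \<in> {0..1}" "y \<in> {0..1}"
    define s where "s = (\<Sum>i<m. \<bar>f i x - f i y\<bar>)"
    have s0: "s \<ge> 0" unfolding s_def by (simp add: sum_nonneg)
    have a: "\<bar>g x - g y\<bar> \<le> L1 * s" "\<bar>h x - h y\<bar> \<le> L2 * s" "\<bar>g x\<bar> \<le> B1" "\<bar>h y\<bar> \<le> B2"
      using xy 1 2 unfolding s_def by auto
    have "g x * h x - g y * h y = g x * (h x - h y) + h y * (g x - g y)" by algebra
    then have "\<bar>g x * h x - g y * h y\<bar> \<le> \<bar>g x\<bar> * \<bar>h x - h y\<bar> + \<bar>h y\<bar> * \<bar>g x - g y\<bar>"
      by (metis abs_mult abs_triangle_ineq)
    also have "\<dots> \<le> B1 * (L2 * s) + B2 * (L1 * s)"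
      using a 1 2 by (intro add_mono mult_mono) auto
    finally show "\<bar>g x * h x - g y * h y\<bar> \<le> (B1 * L2 + B2 * L1) * (\<Sum>i<m. \<bar>f i x - f i y\<bar>)"
      unfolding s_def[symmetric] by (simp add: algebra_simps)
  qed
  moreover have "\<forall>x\<in>{0..1}. \<bar>g x * h x\<bar> \<le> B1 * B2"
  proof
    fix x :: real assume "x \<in> {0..1}"
    then have "\<bar>g x\<bar> \<le> B1" "\<bar>h x\<bar> \<le> B2" using 1(3) 2(3) by auto
    then show "\<bar>g x * h x\<bar> \<le> B1 * B2" unfolding abs_mult using 1(1) by (intro mult_mono) auto
  qed
  moreover have "B1 * B2 \<ge> 0" "B1 * L2 + B2 * L1 \<ge> 0" using 1 2 by auto
  ultimately show ?thesis unfolding dom01_def by blast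
qed

lemma dom_sum:
  assumes "finite A" "\<And>a. a \<in> A \<Longrightarrow> dom01 m f (g a)"
  shows "dom01 m f (\<lambda>x. \<Sum>a\<in>A. g a x)"
  using assms by (induction A rule: finite_induct) (auto intro: dom_add dom_const)

lemma dom_prod:
  assumes "finite A" "\<And>a. a \<in> A \<Longrightarrow> dom01 m f (g a)"
  shows "dom01 m f (\<lambda>x. \<Prod>a\<in>A. g a x)"
  using assms by (induction A rule: finite_induct) (auto intro: dom_mult dom_const)

lemma dom_pow:
  assumes "dom01 m f g"
  shows "dom01 m f (\<lambda>x. g x ^ n)"
  by (induction n) (auto intro: dom_mult dom_const assms)

lemma poly_dom:
  assumes "\<And>i. i < m \<Longrightarrow> continuous_on {0..1} (f i)" "r \<in> poly_ring_of m f"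
  shows "\<exists>L\<ge>0. \<forall>x\<in>{0..1}. \<forall>y\<in>{0..1}. \<bar>r x - r y\<bar> \<le> L * (\<Sum>i<m. \<bar>f i x - f i y\<bar>)"
proof -
  obtain A c where A: "finite A" "r = (\<lambda>x. \<Sum>\<alpha>\<in>A. c \<alpha> * (\<Prod>i<m. f i x ^ \<alpha> i))"
    using assms(2) unfolding poly_ring_of_def by blast
  have "dom01 m f r" unfolding A(2)
    by (intro dom_sum dom_mult dom_const dom_prod dom_pow dom_f A(1) assms(1)) auto
  then show ?thesis unfolding dom01_def by blast
qed

lemma cball_cover_pt:
  fixes x y \<delta> :: real
  assumes d: "\<delta> > 0"
  shows "(x, y) \<in> cball (\<delta>/2 * of_int (round (2*x/\<delta>)), \<delta>/2 * of_int (round (2*y/\<delta>))) (\<delta>/2)"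
proof -
  have a: "\<bar>x - \<delta>/2 * of_int (round (2*x/\<delta>))\<bar> \<le> \<delta>/4"
  proof -
    have "\<bar>of_int (round (2*x/\<delta>)) - 2*x/\<delta>\<bar> \<le> 1/2" by (rule of_int_round_abs_le)
    then have "\<delta>/2 * \<bar>of_int (round (2*x/\<delta>)) - 2*x/\<delta>\<bar> \<le> \<delta>/2 * (1/2)" using d by (intro mult_left_mono) auto
    moreover have "x - \<delta>/2 * of_int (round (2*x/\<delta>)) = \<delta>/2 * (2*x/\<delta> - of_int (round (2*x/\<delta>)))"
      using d by (simp add: field_simps)
    then have "\<bar>x - \<delta>/2 * of_int (round (2*x/\<delta>))\<bar> = \<bar>\<delta>/2\<bar> * \<bar>2*x/\<delta> - of_int (round (2*x/\<delta>))\<bar>"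
      by (metis abs_mult)
    then have "\<delta>/2 * \<bar>of_int (round (2*x/\<delta>)) - 2*x/\<delta>\<bar> = \<bar>x - \<delta>/2 * of_int (round (2*x/\<delta>))\<bar>"
      using d by (metis abs_minus_commute abs_of_pos half_gt_zero)
    ultimately show ?thesis by simp
  qed
  have b: "\<bar>y - \<delta>/2 * of_int (round (2*y/\<delta>))\<bar> \<le> \<delta>/4"
  proof -
    have "\<bar>of_int (round (2*y/\<delta>)) - 2*y/\<delta>\<bar> \<le> 1/2" by (rule of_int_round_abs_le)
    then have "\<delta>/2 * \<bar>of_int (round (2*y/\<delta>)) - 2*y/\<delta>\<bar> \<le> \<delta>/2 * (1/2)" using d by (intro mult_left_mono) auto
    moreover have "y - \<delta>/2 * of_int (round (2*y/\<delta>)) = \<delta>/2 * (2*y/\<delta> - of_int (round (2*y/\<delta>)))"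
      using d by (simp add: field_simps)
    then have "\<bar>y - \<delta>/2 * of_int (round (2*y/\<delta>))\<bar> = \<bar>\<delta>/2\<bar> * \<bar>2*y/\<delta> - of_int (round (2*y/\<delta>))\<bar>"
      by (metis abs_mult)
    then have "\<delta>/2 * \<bar>of_int (round (2*y/\<delta>)) - 2*y/\<delta>\<bar> = \<bar>y - \<delta>/2 * of_int (round (2*y/\<delta>))\<bar>"
      using d by (metis abs_minus_commute abs_of_pos half_gt_zero)
    ultimately show ?thesis by simp
  qed
  define u where "u = x - \<delta>/2 * of_int (round (2*x/\<delta>))"
  define v where "v = y - \<delta>/2 * of_int (round (2*y/\<delta>))"
  have "u^2 \<le> (\<delta>/4)^2" "v^2 \<le> (\<delta>/4)^2" using a b unfolding u_def v_def
    by (metis abs_le_square_iff abs_of_nonneg d less_imp_le zero_le_divide_iff zero_le_numeral)+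
  then have "u^2 + v^2 \<le> (\<delta>/2)^2" by (simp add: power_divide) (smt (verit) zero_le_power2)
  then have "sqrt (u^2 + v^2) \<le> sqrt ((\<delta>/2)^2)" by (rule real_sqrt_le_mono)
  then have "sqrt (u^2 + v^2) \<le> \<delta>/2" using d by simp
  then show ?thesis unfolding mem_cball dist_Pair_Pair dist_real_def u_def v_def
    by (simp add: abs_minus_commute power2_abs)
qed



lemma cover_r:
  fixes f :: "nat \<Rightarrow> real \<Rightarrow> real" and r :: "real \<Rightarrow> real"
  assumes d: "0 < \<delta>" "\<delta> \<le> 1" and m: "m \<ge> 1"
    and cont: "\<And>i. i < m \<Longrightarrow> continuous_on {0..1} (f i)"
    and L: "L \<ge> 0" and Ldom: "\<forall>x\<in>{0..1}. \<forall>y\<in>{0..1}. \<bar>r x - r y\<bar> \<le> L * (\<Sum>i<m. \<bar>f i x - f i y\<bar>)"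
  shows "real (covering_number \<delta> (graph01 r)) \<le> (60 + 72*L) * (\<Sum>i<m. real (covering_number \<delta> (graph01 (f i))))"
proof -
  have "\<exists>C. i < m \<longrightarrow> (finite C \<and> card C = covering_number \<delta> (graph01 (f i)) \<and>
      (\<forall>S\<in>C. bounded S \<and> diameter S \<le> \<delta>) \<and> graph01 (f i) \<subseteq> \<Union>C)" for i
  proof (cases "i < m")
    case True
    show ?thesis using cov_attained[OF graph_cover_exists[OF cont[OF True] d(1)]] by blast
  qed simp
  then have "\<forall>i. \<exists>C. i < m \<longrightarrow> (finite C \<and> card C = covering_number \<delta> (graph01 (f i)) \<and>
      (\<forall>S\<in>C. bounded S \<and> diameter S \<le> \<delta>) \<and> graph01 (f i) \<subseteq> \<Union>C)" by blast
  from choice[OF this] obtain C where C0: "\<forall>i. i < m \<longrightarrow> (finite (C i) \<and> card (C i) = covering_number \<delta> (graph01 (f i)) \<and>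
      (\<forall>S\<in>C i. bounded S \<and> diameter S \<le> \<delta>) \<and> graph01 (f i) \<subseteq> \<Union>(C i))" by blast
  have C: "\<And>i. i < m \<Longrightarrow> finite (C i) \<and> card (C i) = covering_number \<delta> (graph01 (f i)) \<and>
      (\<forall>S\<in>C i. bounded S \<and> diameter S \<le> \<delta>) \<and> graph01 (f i) \<subseteq> \<Union>(C i)"
    using C0 by blast
  define N where "N i = covering_number \<delta> (graph01 (f i))" for i
  define J where "J = \<lfloor>1/\<delta>\<rfloor>"
  define D where "D i j = card {S\<in>C i. \<exists>t\<in>{0..1}. \<lfloor>t/\<delta>\<rfloor> = j \<and> (t, f i t) \<in> S}" for i j
  define h where "h j = 2*L*(\<Sum>i<m. real (D i j))" for j
  have h0: "h j \<ge> 0" for j unfolding h_def using L by (simp add: sum_nonneg)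
  have colr: "\<bar>r x - r (of_int j * \<delta>)\<bar> \<le> \<delta> * h j" if x: "x \<in> {0..1}" "\<lfloor>x/\<delta>\<rfloor> = j" for x j
  proof -
    have "of_int j \<le> x/\<delta>" using x(2) by (metis of_int_floor_le)
    then have jx: "of_int j * \<delta> \<le> x" using d by (simp add: le_divide_eq)
    have "0 \<le> j" using x d by (metis floor_mono floor_zero zero_le_divide_iff atLeastAtMost_iff less_imp_le)
    then have j01: "of_int j * \<delta> \<in> {0..1}" using jx x d by auto
    have jj: "\<lfloor>(of_int j * \<delta>)/\<delta>\<rfloor> = j" using d by simp
    have "\<bar>r x - r (of_int j * \<delta>)\<bar> \<le> L * (\<Sum>i<m. \<bar>f i x - f i (of_int j * \<delta>)\<bar>)"
      using Ldom x j01 by blast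
    also have "\<dots> \<le> L * (\<Sum>i<m. 2*\<delta>*real (D i j))"
      using L C cont x j01 jj unfolding D_def
      by (intro mult_left_mono sum_mono col_osc[OF _ d(1)]) auto
    also have "\<dots> = \<delta> * h j" unfolding h_def by (simp add: sum_distrib_left[symmetric] algebra_simps)
    finally show ?thesis .
  qed
  define cen where "cen x = (round (2*x/\<delta>), round (2*r x/\<delta>))" for x
  define c where "c j = round (2 * r (of_int j * \<delta>)/\<delta>)" for j
  define H where "H j = \<lceil>2 * h j\<rceil> + 1" for j
  define Q where "Q = (\<Union>j\<in>{0..J}. {2*j..2*j+2} \<times> {c j - H j .. c j + H j})"
  have cenQ: "cen ` {0..1} \<subseteq> Q"
  proof
    fix p assume "p \<in> cen ` {0..1}"
    then obtain x where x: "x \<in> {0..1}" "p = cen x" by auto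
    define j where "j = \<lfloor>x/\<delta>\<rfloor>"
    have "x/\<delta> \<le> 1/\<delta>" using x d by (simp add: divide_right_mono)
    then have "j \<le> J" unfolding j_def J_def by (rule floor_mono)
    moreover have "0 \<le> j" unfolding j_def using x d by simp
    ultimately have jJ: "j \<in> {0..J}" by simp
    have A: "of_int j \<le> x/\<delta>" "x/\<delta> < of_int j + 1" unfolding j_def by linarith+
    have "round (of_int (2*j) :: real) \<le> round (2*x/\<delta>)" using A by (intro round_mono) simp
    then have "round (2*x/\<delta>) \<ge> 2*j" by (metis round_of_int)
    moreover have "round (2*x/\<delta>) \<le> round (of_int (2*j+2) :: real)" using A by (intro round_mono) simp
    then have "round (2*x/\<delta>) \<le> 2*j+2" by (metis round_of_int)
    moreover have "\<bar>round (2*r x/\<delta>) - c j\<bar> \<le> H j"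
    proof -
      have "\<bar>r x - r (of_int j * \<delta>)\<bar> \<le> \<delta> * h j" using colr x j_def by blast
      then have "\<bar>2*r x/\<delta> - 2*r (of_int j * \<delta>)/\<delta>\<bar> \<le> 2*h j" using d
        by (simp add: diff_divide_distrib[symmetric] abs_divide divide_le_eq mult.commute
            flip: right_diff_distrib)
      moreover have "2*h j \<le> of_int \<lceil>2 * h j\<rceil>" by simp
      moreover have "\<bar>of_int (round (2*r x/\<delta>)) - 2*r x/\<delta>\<bar> \<le> 1/2"
        "\<bar>of_int (c j) - 2*r (of_int j * \<delta>)/\<delta>\<bar> \<le> 1/2"
        unfolding c_def by (rule of_int_round_abs_le)+
      ultimately have "\<bar>of_int (round (2*r x/\<delta>)) - of_int (c j)\<bar> \<le> (of_int (H j) :: real)"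
        unfolding H_def by (simp only: abs_le_iff of_int_add of_int_1) linarith
      then have "of_int \<bar>round (2*r x/\<delta>) - c j\<bar> \<le> (of_int (H j) :: real)" by simp
      then show ?thesis by (simp only: of_int_le_iff)
    qed
    ultimately show "p \<in> Q" unfolding Q_def x(2) cen_def using jJ by (auto simp: abs_le_iff)
  qed
  have finQ: "finite Q" unfolding Q_def by auto
  have cardQ: "real (card Q) \<le> (\<Sum>j\<in>{0..J}. 12 * h j + 15)"
  proof -
    have "card Q \<le> (\<Sum>j\<in>{0..J}. card ({2*j..2*j+2} \<times> {c j - H j .. c j + H j}))"
      unfolding Q_def by (rule card_UN_le) simp
    also have "\<dots> = (\<Sum>j\<in>{0..J}. 3 * nat (2 * H j + 1))"
      by (intro sum.cong) (auto simp: card_cartesian_product)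
    finally have "real (card Q) \<le> (\<Sum>j\<in>{0..J}. real (3 * nat (2 * H j + 1)))"
      by (metis of_nat_le_iff of_nat_sum)
    also have "\<dots> \<le> (\<Sum>j\<in>{0..J}. 12 * h j + 15)"
    proof (rule sum_mono)
      fix j
      have "H j \<ge> 1" unfolding H_def using h0[of j] by (smt (verit) ceiling_less_zero)
      then have "real (3 * nat (2 * H j + 1)) = 3 * (2 * of_int (H j) + 1)" by simp
      also have "\<dots> \<le> 12 * h j + 15" unfolding H_def using ceiling_correct[of "2*h j"] by simp
      finally show "real (3 * nat (2 * H j + 1)) \<le> 12 * h j + 15" .
    qed
    finally show ?thesis .
  qed
  define Cr where "Cr = (\<lambda>(a,b). cball (\<delta>/2 * of_int a, \<delta>/2 * of_int b) (\<delta>/2 :: real)) ` (cen ` {0..1})"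
  have finP: "finite (cen ` {0..1})" using finite_subset[OF cenQ finQ] .
  have "covering_number \<delta> (graph01 r) \<le> card Cr"
  proof (rule cov_le)
    show "finite Cr" unfolding Cr_def using finP by simp
    show "\<forall>S\<in>Cr. bounded S \<and> diameter S \<le> \<delta>" unfolding Cr_def using d by (auto split: prod.splits)
    show "graph01 r \<subseteq> \<Union>Cr"
    proof
      fix p assume "p \<in> graph01 r"
      then obtain x where x: "x \<in> {0..1}" "p = (x, r x)" unfolding graph01_def by auto
      show "p \<in> \<Union>Cr" unfolding Cr_def x(2) using x(1) cball_cover_pt[OF d(1), of x "r x"]
        by (auto simp: cen_def intro!: bexI[of _ x])
    qed
  qed
  also have "card Cr \<le> card (cen ` {0..1})" unfolding Cr_def by (rule card_image_le[OF finP])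
  also have "\<dots> \<le> card Q" by (rule card_mono[OF finQ cenQ])
  finally have NrQ: "real (covering_number \<delta> (graph01 r)) \<le> (\<Sum>j\<in>{0..J}. 12 * h j + 15)"
    using cardQ by linarith
  have sumD: "(\<Sum>j\<in>{0..J}. real (D i j)) \<le> 3 * real (N i)" if "i < m" for i
  proof -
    have "(\<Sum>j\<in>{0..J}. D i j) \<le> 3 * card (C i)" unfolding D_def
      by (rule col_count) (use d C that in auto)
    then show ?thesis using C that unfolding N_def by (metis of_nat_le_iff of_nat_mult of_nat_numeral of_nat_sum)
  qed
  have sumh: "(\<Sum>j\<in>{0..J}. h j) \<le> 6 * L * (\<Sum>i<m. real (N i))"
  proof -
    have sw: "(\<Sum>j\<in>{0..J}. \<Sum>i<m. real (D i j)) = (\<Sum>i<m. \<Sum>j\<in>{0..J}. real (D i j))"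
      by (rule sum.swap)
    have "(\<Sum>j\<in>{0..J}. h j) = 2*L*(\<Sum>j\<in>{0..J}. \<Sum>i<m. real (D i j))"
      unfolding h_def by (simp add: sum_distrib_left)
    also have "\<dots> = 2*L*(\<Sum>i<m. \<Sum>j\<in>{0..J}. real (D i j))" using sw by simp
    also have "\<dots> \<le> 2*L*(\<Sum>i<m. 3 * real (N i))"
      using L sumD by (intro mult_left_mono sum_mono) auto
    finally show ?thesis by (simp add: sum_distrib_left mult.assoc)
  qed
  have J0: "J \<ge> 0" unfolding J_def using d by simp
  have cardJ: "real (card {0..J}) \<le> 4 * real (N 0)"
  proof -
    have "1 \<le> 2*\<delta>*card (C 0)" using cov_lower[OF d(1), of "C 0" "f 0"] C m by auto
    then have "1/\<delta> \<le> 2 * real (N 0)" using C[of 0] m d unfolding N_def by (auto simp: divide_le_eq mult.commute)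
    moreover have "real (card {0..J}) = of_int J + 1" using J0 by simp
    moreover have "of_int J \<le> 1/\<delta>" unfolding J_def by simp
    moreover have "1 \<le> 1/\<delta>" using d by simp
    ultimately show ?thesis by linarith
  qed
  have N0: "real (N 0) \<le> (\<Sum>i<m. real (N i))"
    using m by (intro member_le_sum) auto
  have "(\<Sum>j\<in>{0..J}. 12 * h j + 15) = 12 * (\<Sum>j\<in>{0..J}. h j) + 15 * real (card {0..J})"
    by (simp add: sum.distrib sum_distrib_left)
  also have "\<dots> \<le> 12 * (6 * L * (\<Sum>i<m. real (N i))) + 15 * (4 * (\<Sum>i<m. real (N i)))"
    using sumh cardJ N0 by linarith
  finally show ?thesis using NrQ unfolding N_def by (simp add: algebra_simps)
qed



lemma N_pos:
  assumes "continuous_on {0..1} h" "0 < \<delta>"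
  shows "covering_number \<delta> (graph01 h) \<ge> 1"
proof -
  obtain C where C: "finite C" "card C = covering_number \<delta> (graph01 h)"
      "\<forall>S\<in>C. bounded S \<and> diameter S \<le> \<delta>" "graph01 h \<subseteq> \<Union>C"
    using cov_attained[OF graph_cover_exists[OF assms]] by blast
  have "1 \<le> 2*\<delta>*card C" using cov_lower[OF assms(2) C(1) C(3) C(4)] .
  then have "card C \<noteq> 0" by (metis mult_zero_right of_nat_0 not_one_le_zero)
  then show ?thesis using C(2) by simp
qed

lemma ln_bound:
  assumes "real a \<le> K * real b" "K \<ge> 1" "b \<ge> 1"
  shows "ln (real a) \<le> ln K + ln (real b)"
proof (cases "a = 0")
  case True then show ?thesis using assms by simp
next
  case False
  then have "ln (real a) \<le> ln (K * real b)" using assms by (subst ln_le_cancel_iff) auto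
  also have "\<dots> = ln K + ln (real b)" using assms by (simp add: ln_mult)
  finally show ?thesis .
qed

theorem mainTheorem8:
  fixes m :: nat and f :: "nat \<Rightarrow> real \<Rightarrow> real" and r :: "real \<Rightarrow> real"
  assumes "m \<ge> 1"
    and "\<And>i. i < m \<Longrightarrow> continuous_on {0..1} (f i)"
    and "r \<in> poly_ring_of m f"
  shows "upper_box_dim (graph01 r) \<le> Max {upper_box_dim (graph01 (f i)) | i. i < m}"
proof -
  obtain L where L: "L \<ge> 0" "\<forall>x\<in>{0..1}. \<forall>y\<in>{0..1}. \<bar>r x - r y\<bar> \<le> L * (\<Sum>i<m. \<bar>f i x - f i y\<bar>)"
    using poly_dom[OF assms(2) assms(3)] by blast
  define M where "M = Max {upper_box_dim (graph01 (f i)) | i. i < m}"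
  define K where "K = (60 + 72*L) * real m"
  have "(1::real) * 1 \<le> (60+72*L) * real m" by (rule mult_mono) (use L assms(1) in auto)
  then have K1: "K \<ge> 1" unfolding K_def by simp
  have finM: "finite {upper_box_dim (graph01 (f i)) | i. i < m}"
    by (simp add: setcompr_eq_image)
  have leM: "upper_box_dim (graph01 (f i)) \<le> M" if "i < m" for i
    unfolding M_def using finM that by (intro Max_ge) auto
  have "\<forall>y>M. eventually (\<lambda>\<delta>. y > ereal (ln (real (covering_number \<delta> (graph01 r))) / - ln \<delta>)) (at_right 0)"
  proof (intro allI impI)
    fix y assume "y > M"
    then obtain q where q: "M < ereal q" "ereal q < y" using ereal_dense2 by blast
    then obtain q2 where q2: "M < ereal q2" "ereal q2 < ereal q" using ereal_dense2 by blast
    have qq: "q2 < q" using q2 by simp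
    define e where "e = q - q2"
    have e: "e > 0" unfolding e_def using qq by simp
    have ev1: "eventually (\<lambda>\<delta>. \<forall>i\<in>{..<m}. ereal (ln (real (covering_number \<delta> (graph01 (f i)))) / - ln \<delta>) < ereal q2) (at_right 0)"
    proof (rule eventually_ball_finite)
      show "\<forall>i\<in>{..<m}. eventually (\<lambda>\<delta>. ereal (ln (real (covering_number \<delta> (graph01 (f i)))) / - ln \<delta>) < ereal q2) (at_right 0)"
      proof
        fix i assume "i \<in> {..<m}"
        then have "upper_box_dim (graph01 (f i)) < ereal q2" using leM q2(1) by fastforce
        then show "eventually (\<lambda>\<delta>. ereal (ln (real (covering_number \<delta> (graph01 (f i)))) / - ln \<delta>) < ereal q2) (at_right 0)"
          unfolding upper_box_dim_def by (rule Limsup_lessD)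
      qed
    qed simp
    define b where "b = min 1 (exp (- ln K / e))"
    have b: "0 < b" unfolding b_def by simp
    have ev2: "eventually (\<lambda>\<delta>. 0 < \<delta> \<and> \<delta> < b) (at_right (0::real))"
      by (rule eventually_at_rightI[where b=b]) (use b in auto)
    show "eventually (\<lambda>\<delta>. y > ereal (ln (real (covering_number \<delta> (graph01 r))) / - ln \<delta>)) (at_right 0)"
      using ev1 ev2
    proof eventually_elim
      case (elim \<delta>)
      then have d: "0 < \<delta>" "\<delta> < 1" "\<delta> < exp (- ln K / e)" unfolding b_def by auto
      have lnd: "- ln \<delta> > 0" using d by simp
      have "ln \<delta> < ln (exp (- ln K / e))" by (subst ln_less_cancel_iff) (use d in auto)
      then have "ln \<delta> < - ln K / e" by simp
      then have "ln K < e * (- ln \<delta>)" using e by (simp add: field_simps)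
      then have aK: "ln K / (- ln \<delta>) < e" unfolding pos_divide_less_eq[OF lnd] by (simp add: mult.commute)
      have d1: "\<delta> \<le> 1" using d by simp
      define N where "N i = covering_number \<delta> (graph01 (f i))" for i
      obtain i0 where i0: "i0 < m" "\<forall>i<m. N i \<le> N i0"
      proof -
        have "0 \<in> {..<m}" using assms(1) by simp
        then have fin: "finite (N ` {..<m})" "N ` {..<m} \<noteq> {}" by blast+
        have "Max (N ` {..<m}) \<in> N ` {..<m}" using Max_in[OF fin] .
        then obtain i0 where i0: "i0 \<in> {..<m}" "N i0 = Max (N ` {..<m})" by (metis imageE)
        have "\<forall>i<m. N i \<le> N i0"
        proof (intro allI impI)
          fix i assume "i < m"
          then have "N i \<in> N ` {..<m}" by simp
          then show "N i \<le> N i0" unfolding i0(2) using fin(1) by (rule Max_ge[rotated])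
        qed
        then show ?thesis using that i0(1) by blast
      qed
      have Nr: "real (covering_number \<delta> (graph01 r)) \<le> (60 + 72*L) * (\<Sum>i<m. real (N i))"
        unfolding N_def by (rule cover_r[OF d(1) d1 assms(1) assms(2) L(1) L(2)])
      also have "\<dots> \<le> (60 + 72*L) * (\<Sum>i<m. real (N i0))"
        using L(1) i0 by (intro mult_left_mono sum_mono) auto
      also have "\<dots> = K * real (N i0)" unfolding K_def by simp
      finally have "real (covering_number \<delta> (graph01 r)) \<le> K * real (N i0)" .
      moreover have "N i0 \<ge> 1" unfolding N_def using N_pos[OF assms(2)[OF i0(1)] d(1)] .
      ultimately have "ln (real (covering_number \<delta> (graph01 r))) \<le> ln K + ln (real (N i0))"
        using K1 by (intro ln_bound) auto
      then have "ln (real (covering_number \<delta> (graph01 r))) / - ln \<delta> \<le> (ln K + ln (real (N i0))) / - ln \<delta>"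
        by (rule divide_right_mono) (use lnd in auto)
      also have "\<dots> = ln K / - ln \<delta> + ln (real (N i0)) / - ln \<delta>" by (rule add_divide_distrib)
      finally have "ln (real (covering_number \<delta> (graph01 r))) / - ln \<delta> \<le> ln K / - ln \<delta> + ln (real (N i0)) / - ln \<delta>" .
      moreover have "ln (real (N i0)) / - ln \<delta> < q2"
      proof -
        have "i0 \<in> {..<m}" using i0(1) by simp
        then have "ereal (ln (real (N i0)) / - ln \<delta>) < ereal q2" using elim(1) unfolding N_def by blast
        then show ?thesis by simp
      qed
      ultimately have "ln (real (covering_number \<delta> (graph01 r))) / - ln \<delta> < q"
        using aK unfolding e_def by linarith
      then have "ereal (ln (real (covering_number \<delta> (graph01 r))) / - ln \<delta>) < ereal q" by simp
      then show ?case using q(2) by (rule order.strict_trans)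
    qed
  qed
  then have "Limsup (at_right 0) (\<lambda>\<delta>. ereal (ln (real (covering_number \<delta> (graph01 r))) / - ln \<delta>)) \<le> M"
    unfolding Limsup_le_iff .
  then show ?thesis unfolding M_def upper_box_dim_def[of "graph01 r"] .
qed

end
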